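(* Let $n\ge1$, let $x$ be a vertex of $Q_n$ and $k_1,\dots,k_m<n$, and let $\mu = [x;\,k_1\dots k_ik_{i+1}\dots k_m]$. For some $i<m$, let $\nu = [x;\,k_1\dots k_{i-1}k_{i+1}k_ik_{i+2}\dots k_m]$ be the path obtained by swapping $k_i$ and $k_{i+1}$. (1) If $k_i\ne k_{i+1}$, then $p_\mu = -p_\nu$ in $C^\ast(Q_n)$. (2) If $k_i = k_{i+1}$, then $p_\mu = p_\nu$.
   Context: For $n\ge1$, identify integers $0\le i<2^n$ with their $n$-digit binary representations and let $i\#k$ be $i$ with its $k$-th digit flipped. The hypercube $Q_n$ has vertex classes $U_n$ (even number of $1$'s) and $V_n$ (odd number of $1$'s), with $i\in U_n$, $j\in V_n$ adjacent iff $j = i\#k$ for some $k<n$. $C^\ast(Q_n)$ is the universal unital C*-algebra generated by projections $p_x$ ($x\in U_n\cup V_n$) with $\sum_{u\in U_n}p_u = 1 = \sum_{v\in V_n}p_v$ and $p_up_v=0$ when $u\in U_n,v\in V_n$ are non-adjacent. For a vertex $x$ and indices $k_1,\dots,k_m<n$, $[x;\,k_1\dots k_m]$ denotes the path $x_1x_2\dots x_{m+1}$ with $x_1=x$ and $x_{r+1} = x_r\#k_r$; for a path $\mu = x_1\dots x_{m+1}$ one sets $p_\mu = p_{x_1}p_{x_2}\cdots p_{x_{m+1}}$. *)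

theory Defs
  imports "HOL-Analysis.Analysis"
begin

text \<open>The complex scalar multiplication
  is an extra operation compatible with the real one of the type class.\<close>

locale unital_cstar_algebra =
  fixes scaleC :: "complex \<Rightarrow> 'a::{real_normed_algebra_1, banach} \<Rightarrow> 'a"
    and star :: "'a \<Rightarrow> 'a"
  assumes scaleC_add_right: "scaleC c (x + y) = scaleC c x + scaleC c y"
    and scaleC_add_left: "scaleC (c + d) x = scaleC c x + scaleC d x"
    and scaleC_scaleC: "scaleC c (scaleC d x) = scaleC (c * d) x"
    and scaleC_one: "scaleC 1 x = x"
    and scaleC_of_real: "scaleC (of_real r) x = scaleR r x"
    and norm_scaleC: "norm (scaleC c x) = cmod c * norm x"
    and scaleC_mult_left: "scaleC c (x * y) = scaleC c x * y"
    and scaleC_mult_right: "scaleC c (x * y) = x * scaleC c y"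
    and star_add: "star (x + y) = star x + star y"
    and star_scaleC: "star (scaleC c x) = scaleC (cnj c) (star x)"
    and star_mult: "star (x * y) = star y * star x"
    and star_star: "star (star x) = x"
    and cstar_identity: "norm (star x * x) = (norm x)^2"

text \<open>Vertices of Q_n: naturals below 2^n; the k-th binary digit flipped.\<close>
definition flip :: "nat \<Rightarrow> nat \<Rightarrow> nat" (infixl "#\<^sub>f" 70) where
  "i #\<^sub>f k = flip_bit k i"

definition Ucls :: "nat \<Rightarrow> nat set" where
  "Ucls n = {i. i < 2^n \<and> even (card {k. k < n \<and> bit i k})}"

definition Vcls :: "nat \<Rightarrow> nat set" where
  "Vcls n = {i. i < 2^n \<and> odd (card {k. k < n \<and> bit i k})}"

definition adjacent :: "nat \<Rightarrow> nat \<Rightarrow> nat \<Rightarrow> bool" where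
  "adjacent n i j \<longleftrightarrow> (\<exists>k<n. j = i #\<^sub>f k)"

definition Qn_family :: "(complex \<Rightarrow> 'a::{real_normed_algebra_1, banach} \<Rightarrow> 'a) \<Rightarrow> ('a \<Rightarrow> 'a)
    \<Rightarrow> nat \<Rightarrow> (nat \<Rightarrow> 'a) \<Rightarrow> bool" where
  "Qn_family scaleC star n p \<longleftrightarrow>
     (\<forall>x \<in> Ucls n \<union> Vcls n. p x * p x = p x \<and> star (p x) = p x) \<and>
     (\<Sum>u\<in>Ucls n. p u) = 1 \<and> (\<Sum>v\<in>Vcls n. p v) = 1 \<and>
     (\<forall>u\<in>Ucls n. \<forall>v\<in>Vcls n. \<not> adjacent n u v \<longrightarrow> p u * p v = 0)"

fun path :: "nat \<Rightarrow> nat list \<Rightarrow> nat list" where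
  "path x [] = [x]"
| "path x (k # ks) = x # path (x #\<^sub>f k) ks"

definition p_path :: "(nat \<Rightarrow> 'a::monoid_mult) \<Rightarrow> nat list \<Rightarrow> 'a" where
  "p_path p \<mu> = prod_list (map p \<mu>)"

definition swap_at :: "nat \<Rightarrow> 'b list \<Rightarrow> 'b list" where
  "swap_at j ks = ks[j := ks ! Suc j, Suc j := ks ! j]"

end

theory Submission
  imports Defs
begin


lemma binom_one_plus:
  fixes w :: "'a::ring_1"
  shows "(1 + w)^m = (\<Sum>j\<le>m. of_nat (m choose j) * w^j)"
proof (induction m)
  case 0 then show ?case by simp
next
  case (Suc m)
  have "(1 + w)^Suc m = (1 + w) * (\<Sum>j\<le>m. of_nat (m choose j) * w^j)"
    using Suc by simp
  also have "\<dots> = (\<Sum>j\<le>m. of_nat (m choose j) * w^j) + w * (\<Sum>j\<le>m. of_nat (m choose j) * w^j)"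
    by (simp add: distrib_right)
  also have "w * (\<Sum>j\<le>m. of_nat (m choose j) * w^j) = (\<Sum>j\<le>m. of_nat (m choose j) * w^Suc j)"
    unfolding sum_distrib_left
    by (rule sum.cong[OF refl]) (metis mult.assoc mult_of_nat_commute power_Suc)
  also have "(\<Sum>j\<le>m. of_nat (m choose j) * w^j) = 1 + (\<Sum>j\<le>m. of_nat (m choose Suc j) * w^Suc j)"
  proof -
    have "(\<Sum>j\<le>m. of_nat (m choose j) * w^j) = 1 + (\<Sum>j<m. of_nat (m choose Suc j) * w^Suc j)"
      using sum.atMost_shift[of "\<lambda>j. of_nat (m choose j) * w^j" m] by (simp add: binomial_eq_0[of m "Suc m"])
    also have "(\<Sum>j<m. of_nat (m choose Suc j) * w^Suc j) = (\<Sum>j\<le>m. of_nat (m choose Suc j) * w^Suc j)"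
      by (simp add: lessThan_Suc_atMost[symmetric] binomial_eq_0[of m "Suc m"])
    finally show ?thesis .
  qed
  also have "(\<Sum>j\<le>Suc m. of_nat (Suc m choose j) * w^j)
      = 1 + (\<Sum>j\<le>m. of_nat (m choose j) * w^Suc j) + (\<Sum>j\<le>m. of_nat (m choose Suc j) * w^Suc j)"
    by (subst sum.atMost_Suc_shift) (simp add: distrib_right sum.distrib add.assoc del: sum.atMost_Suc)
  ultimately show ?case by (simp add: algebra_simps)
qed


lemma roots_sum:
  fixes N j :: nat
  assumes N: "N \<ge> 2" and j: "j \<le> N - 1"
  defines "\<omega> \<equiv> exp (2 * of_real pi * \<i> / of_nat N)"
  shows "(\<Sum>k<N. \<omega>^(k*(N-1)) * (\<omega>^k)^j) = (if j = 1 then of_nat N else 0)"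
proof -
  have pw: "\<omega>^t = exp (2 * of_real pi * \<i> * of_nat t / of_nat N)" for t
    unfolding \<omega>_def exp_of_nat_mult[symmetric] by (simp add: field_simps)
  have one: "\<omega>^t = 1 \<longleftrightarrow> N dvd t" for t
    unfolding pw using complex_root_unity_eq_1[of N t] N by simp
  define q where "q = \<omega>^(N-1+j)"
  have "\<omega>^(k*(N-1)) * (\<omega>^k)^j = q^k" for k
    unfolding q_def by (simp add: power_add[symmetric] power_mult[symmetric] algebra_simps)
  then have "(\<Sum>k<N. \<omega>^(k*(N-1)) * (\<omega>^k)^j) = (\<Sum>k<N. q^k)" by simp
  also have "\<dots> = (if q = 1 then of_nat N else (1 - q^N) / (1 - q))" by (rule sum_gp_strict)
  also have "q^N = 1" unfolding q_def power_mult[symmetric] one by simp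
  also have "q = 1 \<longleftrightarrow> j = 1"
  proof
    assume "q = 1"
    then have dv: "N dvd (N - 1 + j)" using one q_def by simp
    show "j = 1"
    proof (cases "j = 0")
      case True
      then have "N dvd (N - 1)" using dv by simp
      moreover have "0 < N - 1" "N - 1 < N" using N by auto
      ultimately show ?thesis by (meson nat_dvd_not_less)
    next
      case False
      then have "N - 1 + j = N + (j - 1)" using N by auto
      then have "N dvd (j - 1)" using dv by (simp add: dvd_add_right_iff)
      moreover have "j - 1 < N" using j N by auto
      ultimately have "j - 1 = 0" using nat_dvd_not_less by (metis gr0I)
      then show ?thesis using False by simp
    qed
  next
    assume "j = 1" then show "q = 1" unfolding q_def using one N by simp
  qed
  finally show ?thesis by simp
qed

context unital_cstar_algebra
begin

lemma scaleC_zero_left[simp]: "scaleC 0 x = 0"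
  using scaleC_add_left[of 0 0 x] by simp

lemma scaleC_zero_right[simp]: "scaleC c 0 = 0"
  using scaleC_add_right[of c 0 0] by simp

lemma star_zero[simp]: "star 0 = 0"
  using star_add[of 0 0] by simp

lemma star_minus: "star (- x) = - star x"
  using star_add[of x "-x"] by (simp add: eq_neg_iff_add_eq_0 add.commute)

lemma star_diff: "star (x - y) = star x - star y"
  using star_add[of x "-y"] star_minus[of y] by simp

lemma star_one[simp]: "star 1 = 1"
proof -
  have "star (star 1 * 1) = star 1 * star (star 1)" by (rule star_mult)
  then show ?thesis by (simp add: star_star)
qed

lemma star_scaleR: "star (r *\<^sub>R x) = r *\<^sub>R star x"
  using star_scaleC[of "complex_of_real r" x] by (simp add: scaleC_of_real)

lemma scaleC_sum_left: "scaleC (\<Sum>i\<in>A. f i) x = (\<Sum>i\<in>A. scaleC (f i) x)"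
  by (induction A rule: infinite_finite_induct) (simp_all add: scaleC_add_left)

lemma scaleC_sum_right: "scaleC c (\<Sum>i\<in>A. f i) = (\<Sum>i\<in>A. scaleC c (f i))"
  by (induction A rule: infinite_finite_induct) (simp_all add: scaleC_add_right)

lemma scaleC_of_nat: "scaleC (of_nat k) x = of_nat k * x"
  using scaleC_of_real[of "real k" x] by (simp add: scaleR_conv_of_real)

lemma scaleC_power: "(scaleC a d)^j = scaleC (a^j) (d^j)"
proof (induction j)
  case 0 then show ?case using scaleC_one[of 1] by simp
next
  case (Suc j)
  have "(scaleC a d)^Suc j = scaleC a d * scaleC (a^j) (d^j)" using Suc by simp
  also have "\<dots> = scaleC a (d * scaleC (a^j) (d^j))"
    by (rule scaleC_mult_left[symmetric])
  also have "d * scaleC (a^j) (d^j) = scaleC (a^j) (d * d^j)"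
    by (rule scaleC_mult_right[symmetric])
  also have "scaleC a (scaleC (a^j) (d * d^j)) = scaleC (a * a^j) (d * d^j)"
    by (rule scaleC_scaleC)
  finally show ?case by simp
qed


lemma lin3: fixes A B C :: "'b::real_vector"
  shows "a *\<^sub>R (A + B + B + C) + b1 *\<^sub>R (A + C) + b2 *\<^sub>R (A - C)
     = (a+b1+b2) *\<^sub>R A + (a+a) *\<^sub>R B + (a + b1 - b2) *\<^sub>R C"
  by (simp only: scaleR_add_left scaleR_add_right scaleR_diff_right scaleR_diff_left) (simp add: algebra_simps)

lemma sq_bounds:
  fixes e d :: 'a
  assumes e: "e*e = e" and ed: "e*d = d" "d*e = d"
    and n1: "norm (e+d) \<le> 1" and n2: "norm (e-d) \<le> 1"
  shows "norm (e + d*d) \<le> 1" "norm (e - d*d) \<le> 1"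
proof -
  have "(e-d)*(e+d) = e*e + e*d - d*e - d*d" by (simp add: algebra_simps)
  then have "e - d*d = (e-d)*(e+d)" using e ed by simp
  then have "norm (e - d*d) \<le> norm (e-d) * norm (e+d)" by (simp add: norm_mult_ineq)
  also have "\<dots> \<le> 1" using n1 n2 by (simp add: mult_le_one)
  finally show "norm (e - d*d) \<le> 1" .
  have "e + d*d = (1/2) *\<^sub>R ((e+d)*(e+d) + (e-d)*(e-d))" using e ed
    by (simp add: algebra_simps scaleR_2[symmetric])
  then have "norm (e + d*d) \<le> (1/2) * (norm ((e+d)*(e+d)) + norm ((e-d)*(e-d)))"
    by (simp add: norm_triangle_ineq)
  also have "\<dots> \<le> (1/2) * (norm (e+d) * norm (e+d) + norm (e-d) * norm (e-d))"
    by (intro mult_left_mono add_mono norm_mult_ineq) auto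
  also have "\<dots> \<le> (1/2) * (1 + 1)"
    using n1 n2 by (intro mult_left_mono add_mono mult_le_one) auto
  finally show "norm (e + d*d) \<le> 1" by simp
qed

lemma conv_bound:
  fixes e D :: 'a
  assumes ed: "e*D = D" "D*e = D" "e*e = e"
    and n1: "norm (e+D) \<le> 1" and n3: "norm (e + D*D) \<le> 1" and n4: "norm (e - D*D) \<le> 1"
    and a: "0 \<le> a" "a \<le> 1/2" and r: "0 \<le> r" "r \<le> 1/4"
  shows "norm (e + (2*a) *\<^sub>R D + r *\<^sub>R (D*D)) \<le> 1"
proof -
  define b where "b = r - a"
  define b1 where "b1 = (1 - a + b)/2"
  define b2 where "b2 = (1 - a - b)/2"
  have b1: "0 \<le> b1" and b2: "0 \<le> b2" using a r by (auto simp: b1_def b2_def b_def)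
  have sq: "(e+D)*(e+D) = e + D + D + D*D" using ed by (simp add: algebra_simps)
  have "e + (2*a) *\<^sub>R D + r *\<^sub>R (D*D) = e + (a+a) *\<^sub>R D + r *\<^sub>R (D*D)" by simp
  also have "\<dots> = a *\<^sub>R ((e+D)*(e+D)) + b1 *\<^sub>R (e + D*D) + b2 *\<^sub>R (e - D*D)"
    unfolding sq lin3 by (simp add: b1_def b2_def b_def field_simps)
  also have "norm \<dots> \<le> a * norm ((e+D)*(e+D)) + b1 * norm (e + D*D) + b2 * norm (e - D*D)"
    using a b1 b2 by (metis (no_types, lifting) abs_of_nonneg norm_scaleR norm_triangle_le add_mono order_refl)
  also have "\<dots> \<le> a * 1 + b1 * 1 + b2 * 1"
  proof -
    have "norm ((e+D)*(e+D)) \<le> 1"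
      using norm_mult_ineq[of "e+D" "e+D"] n1 mult_le_one[OF n1 _ n1] by (smt (verit) norm_ge_zero)
    then show ?thesis using a b1 b2 n3 n4 by (intro add_mono mult_left_mono) auto
  qed
  also have "\<dots> = 1" by (simp add: b1_def b2_def field_simps)
  finally show ?thesis .
qed


lemma disk_bound:
  fixes e d :: 'a
  assumes e: "e*e = e" "star e = e" and d: "star d = d" "e*d = d" "d*e = d"
    and n1: "norm (e+d) \<le> 1" and n2: "norm (e-d) \<le> 1" and z: "cmod z \<le> 1/2"
  shows "norm (e + scaleC z d) \<le> 1"
proof -
  have dd: "norm (e + d*d) \<le> 1" "norm (e - d*d) \<le> 1" using sq_bounds[OF e(1) d(2,3) n1 n2] by auto
  define y where "y = e + scaleC z d"
  have sy: "star y = e + scaleC (cnj z) d" unfolding y_def using e d by (simp add: star_add star_scaleC)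
  have t1: "e * scaleC z d = scaleC z d" using scaleC_mult_right[of z e d] d by simp
  have t2: "scaleC (cnj z) d * e = scaleC (cnj z) d" using scaleC_mult_left[of "cnj z" d e] d by simp
  have t3: "scaleC (cnj z) d * scaleC z d = scaleC (cnj z * z) (d*d)"
    by (metis scaleC_mult_left scaleC_mult_right scaleC_scaleC)
  have t4: "scaleC z d + scaleC (cnj z) d = (2 * Re z) *\<^sub>R d"
    using scaleC_add_left[of z "cnj z" d] scaleC_of_real[of "2 * Re z" d] by (simp add: complex_add_cnj)
  have t5: "scaleC (cnj z * z) (d*d) = (cmod z ^ 2) *\<^sub>R (d*d)"
    using scaleC_of_real[of "cmod z ^ 2" "d*d"] by (metis complex_norm_square mult.commute of_real_power)
  have "star y * y = (e + scaleC (cnj z) d) * (e + scaleC z d)" using sy by (simp add: y_def)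
  also have "\<dots> = e*e + e * scaleC z d + scaleC (cnj z) d * e + scaleC (cnj z) d * scaleC z d"
    by (simp add: algebra_simps)
  also have "\<dots> = e + (scaleC z d + scaleC (cnj z) d) + scaleC (cnj z * z) (d*d)"
    using e t1 t2 t3 by (simp add: algebra_simps)
  also have "\<dots> = e + (2 * Re z) *\<^sub>R d + (cmod z ^ 2) *\<^sub>R (d*d)" using t4 t5 by simp
  finally have sp: "star y * y = e + (2 * Re z) *\<^sub>R d + (cmod z ^ 2) *\<^sub>R (d*d)" .
  have r: "0 \<le> cmod z ^ 2" "cmod z ^ 2 \<le> 1/4"
    using z power_mono[OF z, of 2] by (auto simp: power2_eq_square)
  have "norm (star y * y) \<le> 1"
  proof (cases "Re z \<ge> 0")
    case True
    have "abs (Re z) \<le> 1/2" using abs_Re_le_cmod[of z] z by linarith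
    then show ?thesis unfolding sp
      using conv_bound[OF d(2,3) e(1) n1 dd, of "Re z" "cmod z ^ 2"] True r by auto
  next
    case False
    have "abs (Re z) \<le> 1/2" using abs_Re_le_cmod[of z] z by linarith
    moreover have "e + (2 * Re z) *\<^sub>R d + (cmod z ^ 2) *\<^sub>R (d*d)
       = e + (2 * (- Re z)) *\<^sub>R (-d) + (cmod z ^ 2) *\<^sub>R ((-d)*(-d))" by simp
    moreover have "e * (-d) = -d" "(-d) * e = -d" "norm (e + -d) \<le> 1"
      "norm (e + (-d)*(-d)) \<le> 1" "norm (e - (-d)*(-d)) \<le> 1"
      using d n2 dd by auto
    ultimately show ?thesis unfolding sp
      using conv_bound[of e "-d" "- Re z" "cmod z ^ 2"] e False r by simp
  qed
  then have "norm y ^ 2 \<le> 1" using cstar_identity[of y] by simp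
  then have "norm y \<le> 1" by (simp add: power_le_one_iff)
  then show ?thesis by (simp add: y_def)
qed


lemma pow_corner:
  fixes e w :: 'a
  assumes "e*e = e" "e*w = w" "w*e = w"
  shows "(e + w)^Suc m = e * (1 + w)^Suc m"
proof (induction m)
  case 0 then show ?case using assms by (simp add: algebra_simps)
next
  case (Suc m)
  have "(e + w)^Suc (Suc m) = (e + w) * e * (1 + w)^Suc m"
    using Suc by (simp add: mult.assoc)
  also have "(e + w) * e = e * (1 + w)" using assms by (simp add: algebra_simps)
  finally show ?case by (simp add: mult.assoc)
qed

lemma binom_scaleC: "(1 + scaleC a d)^m = (\<Sum>j\<le>m. scaleC (of_nat (m choose j) * a^j) (d^j))"
  unfolding binom_one_plus scaleC_power
  by (rule sum.cong[OF refl]) (simp add: scaleC_of_nat[symmetric] scaleC_scaleC)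

lemma avg_identity:
  fixes e d :: 'a
  assumes e: "e*e = e" and d: "e*d = d" "d*e = d" and m: "m \<ge> 1"
  defines "N \<equiv> Suc m"
  defines "\<omega> \<equiv> exp (2 * of_real pi * \<i> / of_nat N)"
  shows "(\<Sum>k<N. scaleC (\<omega>^(k*(N-1))) ((e + scaleC (c * \<omega>^k) d)^m))
       = scaleC (of_nat N * of_nat m * c) d"
proof -
  have ew: "e * scaleC b d = scaleC b d" "scaleC b d * e = scaleC b d" for b
    using scaleC_mult_right[of b e d] scaleC_mult_left[of b d e] d by auto
  obtain m' where m': "m = Suc m'" using m by (cases m) auto
  have T: "(e + scaleC b d)^m = e * (\<Sum>j\<le>m. scaleC (of_nat (m choose j) * b^j) (d^j))" for b
    unfolding m' pow_corner[OF e ew(1) ew(2)] binom_scaleC ..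
  have "(\<Sum>k<N. scaleC (\<omega>^(k*(N-1))) ((e + scaleC (c * \<omega>^k) d)^m))
      = (\<Sum>k<N. e * (\<Sum>j\<le>m. scaleC (\<omega>^(k*(N-1)) * (of_nat (m choose j) * (c * \<omega>^k)^j)) (d^j)))"
    unfolding T by (rule sum.cong[OF refl]) (simp add: scaleC_mult_right scaleC_sum_right scaleC_scaleC)
  also have "\<dots> = e * (\<Sum>j\<le>m. scaleC (\<Sum>k<N. \<omega>^(k*(N-1)) * (of_nat (m choose j) * (c * \<omega>^k)^j)) (d^j))"
    unfolding sum_distrib_left[symmetric] scaleC_sum_left by (rule arg_cong[where f="\<lambda>x. e * x"], rule sum.swap)
  also have "\<dots> = e * (\<Sum>j\<le>m. scaleC (if j = 1 then of_nat N * of_nat m * c else 0) (d^j))"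
  proof -
    have "(\<Sum>k<N. \<omega>^(k*(N-1)) * (of_nat (m choose j) * (c * \<omega>^k)^j))
        = (if j = 1 then of_nat N * of_nat m * c else 0)" if "j \<le> m" for j
    proof -
      have "(\<Sum>k<N. \<omega>^(k*(N-1)) * (of_nat (m choose j) * (c * \<omega>^k)^j))
          = of_nat (m choose j) * c^j * (\<Sum>k<N. \<omega>^(k*(N-1)) * (\<omega>^k)^j)"
        by (simp add: sum_distrib_left power_mult_distrib algebra_simps)
      also have "(\<Sum>k<N. \<omega>^(k*(N-1)) * (\<omega>^k)^j) = (if j = 1 then of_nat N else 0)"
        unfolding \<omega>_def by (rule roots_sum) (use that m in \<open>auto simp: N_def\<close>)
      finally show ?thesis by simp
    qed
    then show ?thesis by (intro arg_cong[where f="\<lambda>x. e * x"] sum.cong) auto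
  qed
  also have "\<dots> = e * scaleC (of_nat N * of_nat m * c) d"
  proof -
    have "(\<Sum>j\<le>m. scaleC (if j = 1 then of_nat N * of_nat m * c else 0) (d^j))
        = (\<Sum>j\<le>m. if j = 1 then scaleC (of_nat N * of_nat m * c) (d^j) else 0)"
      by (rule sum.cong) auto
    also have "\<dots> = scaleC (of_nat N * of_nat m * c) d" using m by (simp add: sum.delta')
    finally show ?thesis by simp
  qed
  also have "\<dots> = scaleC (of_nat N * of_nat m * c) d" by (rule ew(1))
  finally show ?thesis .
qed

lemma crux:
  fixes e d :: 'a
  assumes e: "e*e = e" "star e = e" and d: "star d = d" "e*d = d" "d*e = d"
    and n1: "norm (e+d) \<le> 1" and n2: "norm (e-d) \<le> 1"
  shows "d = 0"
proof -
  have bnd: "real m * (1/2) * norm d \<le> 1" if m: "m \<ge> 1" for m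
  proof -
    define N where "N = Suc m"
    define \<omega> where "\<omega> = exp (2 * of_real pi * \<i> / of_nat N)"
    have nw: "cmod (\<omega>^t) = 1" for t unfolding \<omega>_def norm_power by (simp add: norm_exp_eq_Re)
    have "norm (\<Sum>k<N. scaleC (\<omega>^(k*(N-1))) ((e + scaleC (1/2 * \<omega>^k) d)^m))
        \<le> (\<Sum>k<N. norm (scaleC (\<omega>^(k*(N-1))) ((e + scaleC (1/2 * \<omega>^k) d)^m)))"
      by (rule norm_sum)
    also have "\<dots> \<le> (\<Sum>k<N. 1)"
    proof (rule sum_mono)
      fix k
      have "norm (e + scaleC (1/2 * \<omega>^k) d) \<le> 1"
        by (rule disk_bound[OF e d n1 n2]) (simp add: norm_mult nw)
      then have "norm ((e + scaleC (1/2 * \<omega>^k) d)^m) \<le> 1"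
        by (meson norm_ge_zero norm_power_ineq order_trans power_le_one)
      then show "norm (scaleC (\<omega>^(k*(N-1))) ((e + scaleC (1/2 * \<omega>^k) d)^m)) \<le> 1"
        by (simp add: norm_scaleC nw)
    qed
    also have "\<dots> = real N" by simp
    finally have "norm (scaleC (of_nat N * of_nat m * (1/2)) d) \<le> real N"
      using avg_identity[OF e(1) d(2,3) m, of "1/2"] unfolding N_def \<omega>_def by simp
    then have "real N * (real m * (1/2) * norm d) \<le> real N * 1"
      by (simp add: norm_scaleC norm_mult algebra_simps)
    then show ?thesis by (rule mult_left_le_imp_le) (simp add: N_def)
  qed
  show "d = 0"
  proof (rule ccontr)
    assume "d \<noteq> 0"
    then have pos: "norm d > 0" by simp
    obtain m :: nat where "m > 2 / norm d" using reals_Archimedean2 by blast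
    then have "m * norm d > 2" using pos by (simp add: field_simps)
    moreover have "m \<ge> 1" using \<open>m > 2 / norm d\<close> pos
      by (metis divide_pos_pos less_one not_less of_nat_0 of_nat_less_0_iff zero_less_numeral order.strict_trans not_le gr_implies_not0 less_numeral_extra(3))
    ultimately show False using bnd[of m] by simp
  qed
qed

lemma norm_proj_le1:
  assumes "star q = q" "q * q = q" shows "norm q \<le> 1"
proof -
  have "norm q = norm q ^ 2" using cstar_identity[of q] assms by simp
  then have "norm q = 0 \<or> norm q = 1" by (simp add: power2_eq_square)
  then show ?thesis by auto
qed

lemma zero_if_norm_star:
  assumes "star x * x = 0" shows "x = 0"
  using cstar_identity[of x] assms by simp


lemma proj_orth:
  fixes q :: "'b \<Rightarrow> 'a"
  assumes fin: "finite S" and proj: "\<forall>s\<in>S. q s * q s = q s \<and> star (q s) = q s"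
    and sum1: "(\<Sum>s\<in>S. q s) = 1" and a: "a \<in> S" and c: "c \<in> S" and ac: "a \<noteq> c"
  shows "q a * q c = 0"
proof -
  define e where "e = q a"
  have e: "e * e = e" "star e = e" using proj a by (auto simp: e_def)
  have ne: "norm e \<le> 1" using norm_proj_le1[OF e(2,1)] .
  have starm: "star (e * x * e) = e * star x * e" for x
    using e by (simp add: star_mult mult.assoc)
  have bnd: "norm (e - e * q s * e) \<le> 1" if "s \<in> S" for s
  proof -
    have qs: "q s * q s = q s" "star (q s) = q s" using proj that by auto
    have "star (1 - q s) = 1 - q s" using qs by (simp add: star_diff)
    moreover have "(1 - q s) * (1 - q s) = 1 - q s" using qs by (simp add: algebra_simps)
    ultimately have n1q: "norm (1 - q s) \<le> 1" by (rule norm_proj_le1)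
    have "e - e * q s * e = e * (1 - q s) * e" using e by (simp add: algebra_simps)
    also have "norm \<dots> \<le> norm e * norm (1 - q s) * norm e"
      by (metis norm_mult_ineq order_trans mult_right_mono norm_ge_zero)
    also have "\<dots> \<le> 1" using ne n1q by (simp add: mult_le_one)
    finally show ?thesis .
  qed
  define X where "X = e * q c * e"
  define Y where "Y = (\<Sum>s\<in>S-{a,c}. e * q s * e)"
  have "(\<Sum>s\<in>S. e * q s * e) = e * (\<Sum>s\<in>S. q s) * e"
    by (simp add: sum_distrib_left sum_distrib_right)
  also have "\<dots> = e" using sum1 e by simp
  finally have "e * q a * e + (\<Sum>s\<in>S-{a}. e * q s * e) = e"
    using sum.remove[OF fin a, of "\<lambda>s. e * q s * e"] by simp
  then have "(\<Sum>s\<in>S-{a}. e * q s * e) = 0" using e by (simp add: e_def[symmetric])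
  moreover have "(\<Sum>s\<in>S-{a}. e * q s * e) = X + Y"
    using sum.remove[of "S-{a}" c "\<lambda>s. e * q s * e"] fin c ac unfolding X_def Y_def
    by (simp add: Diff_insert2[symmetric] insert_commute)
  ultimately have XY: "Y = - X" by (simp add: eq_neg_iff_add_eq_0 add.commute)
  define K where "K = card (S-{a,c})"
  have "of_nat K * e - Y = (\<Sum>s\<in>S-{a,c}. e - e * q s * e)"
    by (simp add: Y_def K_def sum_subtractf)
  then have nK: "norm (of_nat K * e + X) \<le> real K"
    using norm_sum[of "\<lambda>s. e - e * q s * e" "S-{a,c}"] sum_mono[of "S-{a,c}" "\<lambda>s. norm (e - e * q s * e)" "\<lambda>s. 1"] bnd
    by (simp add: XY K_def)
  have X0: "X = 0"
  proof (cases "K = 0")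
    case True
    then have "S-{a,c} = {}" using fin by (simp add: K_def)
    then have "Y = 0" unfolding Y_def by (metis sum.empty)
    then show ?thesis using XY by simp
  next
    case False
    define t where "t = 1 / real K"
    have t: "0 < t" "t \<le> 1" "t * real K = 1" using False by (auto simp: t_def)
    define d where "d = t *\<^sub>R X"
    have "e + d = t *\<^sub>R (of_nat K * e + X)"
    proof -
      have "of_nat K * e = real K *\<^sub>R e" by (simp add: scaleR_conv_of_real)
      then show ?thesis using t by (simp add: d_def scaleR_add_right)
    qed
    then have "norm (e + d) = t * norm (of_nat K * e + X)" using t by simp
    also have "\<dots> \<le> t * real K" using nK t by (intro mult_left_mono) auto
    finally have n1: "norm (e + d) \<le> 1" using t by simp
    have "e - d = (1 - t) *\<^sub>R e + t *\<^sub>R (e - X)" by (simp add: d_def algebra_simps)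
    then have "norm (e - d) \<le> (1 - t) * norm e + t * norm (e - X)"
      using t by (metis abs_of_nonneg diff_ge_0_iff_ge less_imp_le norm_scaleR norm_triangle_ineq)
    also have "\<dots> \<le> (1 - t) * 1 + t * 1"
      using t ne bnd[OF c] by (intro add_mono mult_left_mono) (auto simp: X_def)
    finally have n2: "norm (e - d) \<le> 1" by simp
    have sd: "star d = d" using proj c starm unfolding d_def X_def by (simp add: star_scaleR)
    have ed: "e * d = d" "d * e = d" using e unfolding d_def X_def
      by (simp_all add: mult.assoc[symmetric]) (simp add: mult.assoc)
    have "d = 0" by (rule crux[OF e sd ed n1 n2])
    then show "X = 0" using t by (simp add: d_def)
  qed
  have qc: "q c * q c = q c" "star (q c) = q c" using proj c by auto
  have "star (q c * e) = e * q c" using e qc by (simp add: star_mult)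
  then have "star (q c * e) * (q c * e) = e * (q c * q c) * e" by (simp add: mult.assoc)
  also have "\<dots> = X" using qc by (simp add: X_def)
  finally have "star (q c * e) * (q c * e) = 0" using X0 by simp
  then have "q c * e = 0" by (rule zero_if_norm_star)
  then have "star (q c * e) = 0" by simp
  moreover have "star (q c * e) = q a * q c" using e qc by (simp add: star_mult e_def)
  ultimately show ?thesis by simp
qed

end


lemma flip_lt: "i < 2^n \<Longrightarrow> k < n \<Longrightarrow> i #\<^sub>f k < (2::nat)^n"
  unfolding flip_def using take_bit_flip_bit_eq[of n k i] take_bit_nat_eq_self_iff[of n i]
    take_bit_nat_eq_self_iff[of n "flip_bit k i"] by simp

lemma bitf: "bit (x #\<^sub>f k) j \<longleftrightarrow> (k = j \<longleftrightarrow> \<not> bit (x::nat) j)"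
  unfolding flip_def by (simp add: bit_flip_bit_iff)

lemma flip_flip[simp]: "x #\<^sub>f k #\<^sub>f k = x"
  by (rule bit_eqI) (auto simp: bitf)

lemma flip_comm: "x #\<^sub>f k #\<^sub>f l = x #\<^sub>f l #\<^sub>f k"
  by (rule bit_eqI) (auto simp: bitf)

lemma flip_ne: "k \<noteq> l \<Longrightarrow> x #\<^sub>f k \<noteq> x #\<^sub>f l"
proof
  assume "k \<noteq> l" "x #\<^sub>f k = x #\<^sub>f l"
  then have "bit (x #\<^sub>f k) k = bit (x #\<^sub>f l) k" by simp
  then show False using \<open>k \<noteq> l\<close> by (simp add: bitf)
qed

lemma flip2_ne: "k \<noteq> l \<Longrightarrow> x #\<^sub>f k #\<^sub>f l \<noteq> x"
proof
  assume "k \<noteq> l" "x #\<^sub>f k #\<^sub>f l = x"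
  then have "bit (x #\<^sub>f k #\<^sub>f l) k = bit x k" by simp
  then show False using \<open>k \<noteq> l\<close> by (simp add: bitf)
qed

lemma flip2_eq:
  assumes "x #\<^sub>f k #\<^sub>f l = x #\<^sub>f i #\<^sub>f i'" "k \<noteq> l"
  shows "(i = k \<and> i' = l) \<or> (i = l \<and> i' = k)"
proof -
  have b: "bit (x #\<^sub>f k #\<^sub>f l) j = bit (x #\<^sub>f i #\<^sub>f i') j" for j using assms by simp
  have "i = k \<or> i = l"
  proof (rule ccontr)
    assume "\<not> (i = k \<or> i = l)"
    then show False using b[of i] b[of i'] b[of k] assms(2) by (auto simp: bitf split: if_splits)
  qed
  then show ?thesis using b[of k] b[of l] b[of i'] assms(2) by (auto simp: bitf)
qed

lemma bitset:
  assumes "k < n"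
  shows "{j. j < n \<and> bit (x #\<^sub>f k) j} =
    (if bit x k then {j. j < n \<and> bit x j} - {k} else insert k {j. j < n \<and> bit x j})"
  using assms by (auto simp: bitf)

lemma parity_flip:
  assumes "k < n"
  shows "even (card {j. j < n \<and> bit (x #\<^sub>f k) j}) \<longleftrightarrow> odd (card {j. j < n \<and> bit x j})"
proof -
  have fin: "finite {j. j < n \<and> bit x j}" by simp
  show ?thesis
  proof (cases "bit x k")
    case True
    then have "k \<in> {j. j < n \<and> bit x j}" using assms by simp
    then have ce: "card ({j. j < n \<and> bit x j} - {k}) = card {j. j < n \<and> bit x j} - 1"
      and c1: "card {j. j < n \<and> bit x j} \<ge> 1"
      using fin by (auto simp: card_Diff_singleton Suc_leI card_gt_0_iff intro!: Suc_leI)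
    have par: "even (c - 1) \<longleftrightarrow> odd c" if "c \<ge> 1" for c :: nat using that by (cases c) auto
    have e: "{j. j < n \<and> bit (x #\<^sub>f k) j} = {j. j < n \<and> bit x j} - {k}"
      using True by (simp add: bitset[OF assms])
    show ?thesis unfolding e ce using par[OF c1] .
  next
    case False
    then have "k \<notin> {j. j < n \<and> bit x j}" by simp
    then show ?thesis unfolding bitset[OF assms] using False fin by simp
  qed
qed

lemma UV_flip:
  assumes "k < n"
  shows "x \<in> Ucls n \<Longrightarrow> x #\<^sub>f k \<in> Vcls n" "x \<in> Vcls n \<Longrightarrow> x #\<^sub>f k \<in> Ucls n"
  using parity_flip[OF assms, of x] flip_lt[of x n k] assms by (auto simp: Ucls_def Vcls_def)

lemma UV_cover: "x < 2^n \<Longrightarrow> x \<in> Ucls n \<or> x \<in> Vcls n"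
  by (auto simp: Ucls_def Vcls_def)

lemma UV_fin: "finite (Ucls n)" "finite (Vcls n)"
  by (auto simp: Ucls_def Vcls_def)

lemma key_abstract:
  fixes p :: "nat \<Rightarrow> 'a::{real_normed_algebra_1, banach}"
  assumes cs: "unital_cstar_algebra scaleC star"
    and C: "finite C" "(\<Sum>s\<in>C. p s) = 1" "\<forall>s\<in>C. p s * p s = p s \<and> star (p s) = p s"
    and W: "finite W" "(\<Sum>s\<in>W. p s) = 1"
    and y: "y \<in> C" and c: "c \<in> C" "y \<noteq> c"
    and b: "b \<in> W" "b' \<in> W" "b \<noteq> b'"
    and zero: "\<forall>v\<in>W. v \<noteq> b \<and> v \<noteq> b' \<longrightarrow> p y * p v * p c = 0"
  shows "p y * p b * p c = - (p y * p b' * p c)"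
proof -
  have "p y * p c = 0" by (rule unital_cstar_algebra.proj_orth[OF cs C(1) C(3) C(2) y c(1) c(2)])
  moreover have "p y * p c = p y * (\<Sum>s\<in>W. p s) * p c" using W by simp
  also have "\<dots> = (\<Sum>v\<in>W. p y * p v * p c)" by (simp add: sum_distrib_left sum_distrib_right)
  also have "\<dots> = p y * p b * p c + (\<Sum>v\<in>W-{b}. p y * p v * p c)"
    using sum.remove[OF W(1) b(1)] by simp
  also have "(\<Sum>v\<in>W-{b}. p y * p v * p c) = p y * p b' * p c + (\<Sum>v\<in>W-{b}-{b'}. p y * p v * p c)"
    using sum.remove[of "W-{b}" b'] W(1) b by simp
  also have "(\<Sum>v\<in>W-{b}-{b'}. p y * p v * p c) = 0"
    using zero by (intro sum.neutral) auto
  ultimately show ?thesis by (simp add: eq_neg_iff_add_eq_0)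
qed

lemma swap_core_abstract:
  fixes p :: "nat \<Rightarrow> 'a::{real_normed_algebra_1, banach}"
  assumes cs: "unital_cstar_algebra scaleC star"
    and C: "finite C" "(\<Sum>s\<in>C. p s) = 1" "\<forall>s\<in>C. p s * p s = p s \<and> star (p s) = p s"
    and W: "finite W" "(\<Sum>s\<in>W. p s) = 1"
    and CW: "\<And>x k. x \<in> C \<Longrightarrow> k < n \<Longrightarrow> x #\<^sub>f k \<in> W"
    and WC: "\<And>x k. x \<in> W \<Longrightarrow> k < n \<Longrightarrow> x #\<^sub>f k \<in> C"
    and nz: "\<And>u v. u \<in> C \<Longrightarrow> v \<in> W \<Longrightarrow> \<not> (\<exists>k<n. v = u #\<^sub>f k) \<Longrightarrow> p u * p v = 0 \<and> p v * p u = 0"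
    and y: "y \<in> C" and kl: "k < n" "l < n" "k \<noteq> l"
  shows "p y * p (y #\<^sub>f k) * p (y #\<^sub>f k #\<^sub>f l) = - (p y * p (y #\<^sub>f l) * p (y #\<^sub>f k #\<^sub>f l))"
proof (rule key_abstract[OF cs C W y])
  show "y #\<^sub>f k #\<^sub>f l \<in> C" using CW WC y kl by blast
  show "y \<noteq> y #\<^sub>f k #\<^sub>f l" using flip2_ne[OF kl(3)] by metis
  show "y #\<^sub>f k \<in> W" "y #\<^sub>f l \<in> W" using CW y kl by auto
  show "y #\<^sub>f k \<noteq> y #\<^sub>f l" using flip_ne[OF kl(3)] .
  show "\<forall>v\<in>W. v \<noteq> y #\<^sub>f k \<and> v \<noteq> y #\<^sub>f l \<longrightarrow> p y * p v * p (y #\<^sub>f k #\<^sub>f l) = 0"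
  proof (intro ballI impI)
    fix v assume v: "v \<in> W" "v \<noteq> y #\<^sub>f k \<and> v \<noteq> y #\<^sub>f l"
    have cC: "y #\<^sub>f k #\<^sub>f l \<in> C" using CW WC y kl by blast
    show "p y * p v * p (y #\<^sub>f k #\<^sub>f l) = 0"
    proof (cases "\<exists>i<n. v = y #\<^sub>f i")
      case False
      then have "p y * p v = 0" using nz[OF y v(1)] by blast
      then show ?thesis by simp
    next
      case True
      then obtain i where i: "i < n" "v = y #\<^sub>f i" by blast
      show ?thesis
      proof (cases "\<exists>i'<n. v = (y #\<^sub>f k #\<^sub>f l) #\<^sub>f i'")
        case False
        then have "p v * p (y #\<^sub>f k #\<^sub>f l) = 0" using nz[OF cC v(1)] by blast
        then show ?thesis by (simp add: mult.assoc)
      next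
        case True
        then obtain i' where "v = (y #\<^sub>f k #\<^sub>f l) #\<^sub>f i'" by blast
        then have "y #\<^sub>f k #\<^sub>f l = y #\<^sub>f i #\<^sub>f i'" using i by (metis flip_flip)
        then have "i = k \<or> i = l" using flip2_eq kl(3) by blast
        then show ?thesis using v i by auto
      qed
    qed
  qed
qed

lemma swap_core:
  fixes p :: "nat \<Rightarrow> 'a::{real_normed_algebra_1, banach}"
  assumes cs: "unital_cstar_algebra scaleC star" and Q: "Qn_family scaleC star n p"
    and y: "y < 2^n" and kl: "k < n" "l < n" "k \<noteq> l"
  shows "p y * p (y #\<^sub>f k) * p (y #\<^sub>f k #\<^sub>f l) = - (p y * p (y #\<^sub>f l) * p (y #\<^sub>f k #\<^sub>f l))"
proof -
  have proj: "\<forall>x \<in> Ucls n \<union> Vcls n. p x * p x = p x \<and> star (p x) = p x"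
    and sU: "(\<Sum>u\<in>Ucls n. p u) = 1" and sV: "(\<Sum>v\<in>Vcls n. p v) = 1"
    and nadj: "\<forall>u\<in>Ucls n. \<forall>v\<in>Vcls n. \<not> adjacent n u v \<longrightarrow> p u * p v = 0"
    using Q unfolding Qn_family_def by auto
  have sz: "star (0::'a) = 0" using unital_cstar_algebra.star_zero[OF cs] .
  have sm: "star (p u * p v) = p v * p u" if "u \<in> Ucls n \<union> Vcls n" "v \<in> Ucls n \<union> Vcls n" for u v
    using unital_cstar_algebra.star_mult[OF cs, of "p u" "p v"] proj that by auto
  have adj_sym: "(\<exists>k<n. v = u #\<^sub>f k) \<longleftrightarrow> (\<exists>k<n. u = v #\<^sub>f k)" for u v
  proof
    assume "\<exists>k<n. v = u #\<^sub>f k" then obtain k where "k < n" "v = u #\<^sub>f k" by blast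
    then show "\<exists>k<n. u = v #\<^sub>f k" by auto
  next
    assume "\<exists>k<n. u = v #\<^sub>f k" then obtain k where "k < n" "u = v #\<^sub>f k" by blast
    then show "\<exists>k<n. v = u #\<^sub>f k" by auto
  qed
  show ?thesis
  proof (cases "y \<in> Ucls n")
    case True
    show ?thesis
    proof (rule swap_core_abstract[OF cs UV_fin(1) sU _ UV_fin(2) sV _ _ _ True kl])
      show "\<forall>s\<in>Ucls n. p s * p s = p s \<and> star (p s) = p s" using proj by auto
      show "\<And>x k. x \<in> Ucls n \<Longrightarrow> k < n \<Longrightarrow> x #\<^sub>f k \<in> Vcls n" using UV_flip by blast
      show "\<And>x k. x \<in> Vcls n \<Longrightarrow> k < n \<Longrightarrow> x #\<^sub>f k \<in> Ucls n" using UV_flip by blast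
      fix u v assume uv: "u \<in> Ucls n" "v \<in> Vcls n" "\<not> (\<exists>k<n. v = u #\<^sub>f k)"
      then have z: "p u * p v = 0" using nadj unfolding adjacent_def by blast
      then have "p v * p u = 0" using sm[of u v] uv sz by auto
      then show "p u * p v = 0 \<and> p v * p u = 0" using z by simp
    qed
  next
    case False
    then have yV: "y \<in> Vcls n" using UV_cover[OF y] by simp
    show ?thesis
    proof (rule swap_core_abstract[OF cs UV_fin(2) sV _ UV_fin(1) sU _ _ _ yV kl])
      show "\<forall>s\<in>Vcls n. p s * p s = p s \<and> star (p s) = p s" using proj by auto
      show "\<And>x k. x \<in> Ucls n \<Longrightarrow> k < n \<Longrightarrow> x #\<^sub>f k \<in> Vcls n" using UV_flip by blast
      show "\<And>x k. x \<in> Vcls n \<Longrightarrow> k < n \<Longrightarrow> x #\<^sub>f k \<in> Ucls n" using UV_flip by blast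
      fix u v assume uv: "u \<in> Vcls n" "v \<in> Ucls n" "\<not> (\<exists>k<n. v = u #\<^sub>f k)"
      then have z: "p v * p u = 0" using nadj adj_sym unfolding adjacent_def by blast
      then have "p u * p v = 0" using sm[of v u] uv sz by auto
      then show "p u * p v = 0 \<and> p v * p u = 0" using z by simp
    qed
  qed
qed

lemma p_path_Cons: "p_path p (x # xs) = p x * p_path p xs"
  by (simp add: p_path_def)

lemma path_head: "\<exists>R. p_path p (path c post) = p c * R"
proof (cases post)
  case Nil then show ?thesis by (intro exI[of _ 1]) (simp add: p_path_def)
next
  case (Cons a list) then show ?thesis by (auto simp: p_path_def)
qed

lemma swap_at_Suc: "swap_at (Suc j) (k # ks) = k # swap_at j ks"
  by (simp add: swap_at_def)

lemma path_swap:
  "Suc j < length ks \<Longrightarrow> \<exists>A y post.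
     p_path p (path x ks) = A * (p y * p (y #\<^sub>f (ks!j)) * p_path p (path (y #\<^sub>f (ks!j) #\<^sub>f (ks!Suc j)) post)) \<and>
     p_path p (path x (swap_at j ks)) = A * (p y * p (y #\<^sub>f (ks!Suc j)) * p_path p (path (y #\<^sub>f (ks!Suc j) #\<^sub>f (ks!j)) post)) \<and>
     (x < 2^n \<longrightarrow> (\<forall>k\<in>set ks. k < n) \<longrightarrow> y < (2::nat)^n)"
proof (induction j arbitrary: x ks)
  case 0
  then obtain k ks1 where ks1: "ks = k # ks1" by (cases ks) auto
  then obtain l post where "ks1 = l # post" using 0 by (cases ks1) auto
  then have ks: "ks = k # l # post" using ks1 by simp
  show ?case
    by (rule exI[of _ 1], rule exI[of _ x], rule exI[of _ post])
       (simp add: ks swap_at_def p_path_Cons mult.assoc)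
next
  case (Suc j)
  then obtain k0 ks' where ks: "ks = k0 # ks'" by (cases ks) auto
  then have "Suc j < length ks'" using Suc.prems by simp
  from Suc.IH[OF this, of "x #\<^sub>f k0"] obtain A y post where
    h: "p_path p (path (x #\<^sub>f k0) ks') = A * (p y * p (y #\<^sub>f (ks'!j)) * p_path p (path (y #\<^sub>f (ks'!j) #\<^sub>f (ks'!Suc j)) post))"
       "p_path p (path (x #\<^sub>f k0) (swap_at j ks')) = A * (p y * p (y #\<^sub>f (ks'!Suc j)) * p_path p (path (y #\<^sub>f (ks'!Suc j) #\<^sub>f (ks'!j)) post))"
       "(x #\<^sub>f k0 < 2^n \<longrightarrow> (\<forall>k\<in>set ks'. k < n) \<longrightarrow> y < (2::nat)^n)"
    by blast
  show ?case
  proof (rule exI[of _ "p x * A"], rule exI[of _ y], rule exI[of _ post], intro conjI impI)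
    show "p_path p (path x ks) = p x * A * (p y * p (y #\<^sub>f (ks!Suc j)) * p_path p (path (y #\<^sub>f (ks!Suc j) #\<^sub>f (ks!Suc (Suc j))) post))"
      using h(1) by (simp add: ks p_path_Cons mult.assoc)
    show "p_path p (path x (swap_at (Suc j) ks)) = p x * A * (p y * p (y #\<^sub>f (ks!Suc (Suc j))) * p_path p (path (y #\<^sub>f (ks!Suc (Suc j)) #\<^sub>f (ks!Suc j)) post))"
      using h(2) by (simp add: ks swap_at_Suc p_path_Cons mult.assoc)
    assume "x < 2^n" "\<forall>k\<in>set ks. k < n"
    then show "y < 2^n" using h(3) flip_lt[of x n k0] by (simp add: ks)
  qed
qed


theorem lemma3p3:
  fixes scaleC :: "complex \<Rightarrow> 'a::{real_normed_algebra_1, banach} \<Rightarrow> 'a"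
    and star :: "'a \<Rightarrow> 'a" and p :: "nat \<Rightarrow> 'a"
    and n x j :: nat and ks :: "nat list"
  assumes "unital_cstar_algebra scaleC star"
    and "Qn_family scaleC star n p"
    and "n \<ge> 1"
    and "x < 2^n"
    and "\<forall>k\<in>set ks. k < n"
    and "Suc j < length ks"
  shows "(ks ! j \<noteq> ks ! Suc j \<longrightarrow>
            p_path p (path x ks) = - p_path p (path x (swap_at j ks)))
       \<and> (ks ! j = ks ! Suc j \<longrightarrow>
            p_path p (path x ks) = p_path p (path x (swap_at j ks)))"
proof (intro conjI impI)
  assume eq: "ks ! j = ks ! Suc j"
  have "swap_at j ks = ks" unfolding swap_at_def using eq by (metis list_update_id)
  then show "p_path p (path x ks) = p_path p (path x (swap_at j ks))" by simp
next
  assume ne: "ks ! j \<noteq> ks ! Suc j"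
  obtain A y post where
    h: "p_path p (path x ks) = A * (p y * p (y #\<^sub>f (ks!j)) * p_path p (path (y #\<^sub>f (ks!j) #\<^sub>f (ks!Suc j)) post))"
       "p_path p (path x (swap_at j ks)) = A * (p y * p (y #\<^sub>f (ks!Suc j)) * p_path p (path (y #\<^sub>f (ks!Suc j) #\<^sub>f (ks!j)) post))"
       "(x < 2^n \<longrightarrow> (\<forall>k\<in>set ks. k < n) \<longrightarrow> y < (2::nat)^n)"
    using path_swap[OF assms(6), of p x n] by blast
  have y: "y < 2^n" using h(3) assms(4,5) by simp
  have kl: "ks ! j < n" "ks ! Suc j < n" using assms(5,6) by auto
  define c where "c = y #\<^sub>f (ks!j) #\<^sub>f (ks!Suc j)"
  have c': "y #\<^sub>f (ks!Suc j) #\<^sub>f (ks!j) = c" unfolding c_def by (rule flip_comm)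
  obtain R where R: "p_path p (path c post) = p c * R" using path_head by blast
  have core: "p y * p (y #\<^sub>f (ks!j)) * p c = - (p y * p (y #\<^sub>f (ks!Suc j)) * p c)"
    unfolding c_def by (rule swap_core[OF assms(1,2) y kl ne])
  have "p_path p (path x ks) = A * ((p y * p (y #\<^sub>f (ks!j)) * p c) * R)"
    using h(1) R by (simp add: c_def[symmetric] mult.assoc)
  also have "\<dots> = - (A * ((p y * p (y #\<^sub>f (ks!Suc j)) * p c) * R))" using core by simp
  also have "A * ((p y * p (y #\<^sub>f (ks!Suc j)) * p c) * R) = p_path p (path x (swap_at j ks))"
    using h(2) R by (simp add: c' mult.assoc)
  finally show "p_path p (path x ks) = - p_path p (path x (swap_at j ks))" .
qed


end
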